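(* Let $T=(T_{ij})_{i,j\ge1}$ be the infinite lower triangular Toeplitz matrix with $T_{ij}=\frac1{i-j+1}$ for $i\ge j$ and $T_{ij}=0$ for $i<j$. Then $T$ is invertible in the group of lower triangular matrices, and, with $w=T^{-1}\bigl(\tfrac12,\tfrac13,\tfrac14,\dots,\tfrac1{n+1},\dots\bigr)^T$, the matrix product $$\bigl(1,\tfrac12,\tfrac13,\dots,\tfrac1n,\dots\bigr)\,T^{-1}\,\bigl(\tfrac12,\tfrac13,\tfrac14,\dots,\tfrac1{n+1},\dots\bigr)^T=\sum_{n\ge1}\frac{w_n}{n}$$ converges and equals the Euler–Mascheroni constant $\gamma=\lim_{n\to\infty}\bigl(\sum_{m=1}^n\frac1m-\ln n\bigr)$. *)

theory Defs
  imports "HOL-Analysis.Analysis"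
begin

text \<open>Infinite matrices indexed by positive integers i, j \<ge> 1, represented as
  functions nat \<Rightarrow> nat \<Rightarrow> real (values at index 0 are irrelevant).\<close>

definition lower_tri :: "(nat \<Rightarrow> nat \<Rightarrow> real) \<Rightarrow> bool" where
  "lower_tri A \<longleftrightarrow> (\<forall>i\<ge>1. \<forall>j\<ge>1. i < j \<longrightarrow> A i j = 0)"

definition lt_mult :: "(nat \<Rightarrow> nat \<Rightarrow> real) \<Rightarrow> (nat \<Rightarrow> nat \<Rightarrow> real) \<Rightarrow> nat \<Rightarrow> nat \<Rightarrow> real" where
  "lt_mult A B i j = (\<Sum>k=1..i. A i k * B k j)"

definition is_identity :: "(nat \<Rightarrow> nat \<Rightarrow> real) \<Rightarrow> bool" where
  "is_identity A \<longleftrightarrow> (\<forall>i\<ge>1. \<forall>j\<ge>1. A i j = (if i = j then 1 else 0))"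

definition Tmat :: "nat \<Rightarrow> nat \<Rightarrow> real" where
  "Tmat i j = (if j \<le> i then 1 / real (i - j + 1) else 0)"

definition lt_apply :: "(nat \<Rightarrow> nat \<Rightarrow> real) \<Rightarrow> (nat \<Rightarrow> real) \<Rightarrow> nat \<Rightarrow> real" where
  "lt_apply A v i = (\<Sum>k=1..i. A i k * v k)"

end

theory Submission
  imports Defs
begin


fun r :: "nat \<Rightarrow> real \<Rightarrow> real" where
  "r 0 x = 1"
| "r (Suc n) x = r n x * (real n - x) / (real n + 1)"

lemma r_poch: "r n x = pochhammer (-x) n / fact n"
proof (induction n)
  case (Suc n)
  have "r (Suc n) x = (pochhammer (-x) n / fact n) * (real n - x) / (real n + 1)"
    using Suc by simp
  also have "\<dots> = pochhammer (-x) (Suc n) / fact (Suc n)"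
    by (simp add: pochhammer_Suc field_simps)
  finally show ?case .
qed simp

lemma r_gchoose: "r n x = (x gchoose n) * (-1)^n"
  by (simp add: r_poch gbinomial_pochhammer)

lemma r_nonpos: "0 \<le> x \<Longrightarrow> x \<le> 1 \<Longrightarrow> r (Suc n) x \<le> 0 \<and> r (Suc n) x \<ge> -1"
proof (induction n)
  case 0 then show ?case by simp
next
  case (Suc n)
  define c where "c = (real (Suc n) - x) / (real (Suc n) + 1)"
  define a where "a = r (Suc n) x"
  have c: "0 \<le> c" "c \<le> 1"
    using Suc.prems by (auto simp: field_simps c_def)
  have a: "a \<le> 0" "-1 \<le> a" using Suc by (auto simp: a_def)
  have eq: "r (Suc (Suc n)) x = a * c"
    by (simp only: r.simps(2)[of "Suc n"] a_def c_def) simp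
  have "a * c \<le> 0" using a c by (simp add: mult_nonpos_nonneg)
  moreover have "a * (c - 1) \<ge> 0" using a c by (simp add: mult_nonpos_nonpos)
  ultimately show ?case using eq a by (simp add: algebra_simps)
qed

lemma r_at0: "r (Suc n) 0 = 0"
  by (induction n) auto

lemma r_at1: "r (Suc (Suc n)) 1 = 0"
  by (induction n) auto

lemma cont_r: "continuous_on A (r n)"
  by (induction n) (auto intro!: continuous_intros)

definition E :: "nat \<Rightarrow> real \<Rightarrow> real" where
  "E n x = (\<Sum>j=0..n. r j x / (real n + 1 - real j))"

lemma E_rec: "(real n + 2) * E (Suc n) x = (real n + 1 - x) * E n x + r (Suc n) x"
proof -
  have A: "(real n + 2) * E (Suc n) x = (\<Sum>j=0..Suc n. r j x) + (\<Sum>j=0..Suc n. real j * r j x / (real (Suc n) + 1 - real j))"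
    unfolding E_def sum_distrib_left sum.distrib[symmetric]
  proof (rule sum.cong[OF refl])
    fix j assume "j \<in> {0..Suc n}"
    then have "real (Suc n) + 1 - real j > 0" by auto
    then show "(real n + 2) * (r j x / (real (Suc n) + 1 - real j)) = r j x + real j * r j x / (real (Suc n) + 1 - real j)"
      by (simp add: field_simps)
  qed
  have B: "(\<Sum>j=0..Suc n. real j * r j x / (real (Suc n) + 1 - real j)) = (\<Sum>i=0..n. r i x * (real i - x) / (real n + 1 - real i))"
  proof -
    have "(\<Sum>j=0..Suc n. real j * r j x / (real (Suc n) + 1 - real j)) = (\<Sum>i=0..n. real (Suc i) * r (Suc i) x / (real (Suc n) + 1 - real (Suc i)))"
      by (simp only: sum.atLeast0_atMost_Suc_shift) simp
    also have "\<dots> = (\<Sum>i=0..n. r i x * (real i - x) / (real n + 1 - real i))"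
    proof (rule sum.cong[OF refl])
      fix i assume "i \<in> {0..n}"
      have "real (Suc i) * r (Suc i) x = r i x * (real i - x)" by (simp add: field_simps)
      moreover have "real (Suc n) + 1 - real (Suc i) = real n + 1 - real i" by simp
      ultimately show "real (Suc i) * r (Suc i) x / (real (Suc n) + 1 - real (Suc i)) = r i x * (real i - x) / (real n + 1 - real i)"
        by metis
    qed
    finally show ?thesis .
  qed
  have C: "(real n + 1 - x) * E n x = (\<Sum>i=0..n. r i x) + (\<Sum>i=0..n. r i x * (real i - x) / (real n + 1 - real i))"
    unfolding E_def sum_distrib_left sum.distrib[symmetric]
  proof (rule sum.cong[OF refl])
    fix i assume "i \<in> {0..n}"
    then have "real n + 1 - real i > 0" by auto
    then show "(real n + 1 - x) * (r i x / (real n + 1 - real i)) = r i x + r i x * (real i - x) / (real n + 1 - real i)"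
      by (simp add: field_simps)
  qed
  show ?thesis using A B C by (simp add: sum.atLeast0_atMost_Suc del: r.simps)
qed

lemma aux1: "(N::real) \<noteq> 0 \<Longrightarrow> (-e)*((A - x)/N) + (-1/N)*rr = ((-e)*(A-x) - rr)/N"
  by (simp add: field_simps)

lemma deriv_r: "(r (Suc n) has_real_derivative - E n x) (at x)"
proof (induction n)
  case 0 then show ?case unfolding E_def by (auto intro!: derivative_eq_intros)
next
  case (Suc n)
  have d0: "((\<lambda>x. (real (Suc n) - x) / (real (Suc n) + 1)) has_real_derivative
     (- 1 / (real (Suc n) + 1))) (at x)"
    by (rule DERIV_cdivide) (auto intro!: derivative_eq_intros)
  have d1: "((\<lambda>x. r (Suc n) x * ((real (Suc n) - x) / (real (Suc n) + 1))) has_real_derivative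
     (- E n x) * ((real (Suc n) - x) / (real (Suc n) + 1)) + (- 1 / (real (Suc n) + 1)) * r (Suc n) x) (at x)"
    by (rule DERIV_mult[OF Suc.IH d0])
  have d: "((\<lambda>x. r (Suc n) x * (real (Suc n) - x) / (real (Suc n) + 1)) has_real_derivative
     ((- E n x) * (real (Suc n) - x) - r (Suc n) x) / (real (Suc n) + 1)) (at x)"
  proof -
    have "(\<lambda>x. r (Suc n) x * ((real (Suc n) - x) / (real (Suc n) + 1))) = (\<lambda>x. r (Suc n) x * (real (Suc n) - x) / (real (Suc n) + 1))"
      by (simp add: fun_eq_iff del: r.simps)
    moreover have "(- E n x) * ((real (Suc n) - x) / (real (Suc n) + 1)) + (- 1 / (real (Suc n) + 1)) * r (Suc n) x = ((- E n x) * (real (Suc n) - x) - r (Suc n) x) / (real (Suc n) + 1)"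
      by (rule aux1) simp
    ultimately show ?thesis using d1 by metis
  qed
  have "((- E n x) * (real (Suc n) - x) - r (Suc n) x) / (real (Suc n) + 1) = - E (Suc n) x"
  proof -
    have h: "E (Suc n) x = ((real n + 1 - x) * E n x + r (Suc n) x)/(real n + 2)"
      using E_rec[of n x] by (simp add: eq_divide_eq mult.commute del: r.simps)
    have h2: "real (Suc n) + 1 = real n + 2" by simp
    show ?thesis unfolding h h2 by (simp add: field_simps del: r.simps)
  qed
  note eq2 = this
  have "r (Suc (Suc n)) = (\<lambda>x. r (Suc n) x * (real (Suc n) - x) / (real (Suc n) + 1))"
    by (rule ext) (simp only: r.simps(2)[of "Suc n"])
  note eq3 = this
  show ?case unfolding eq3 using d unfolding eq2 .
qed

lemma int_r: "r n integrable_on {0..1}"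
  by (rule integrable_continuous_interval[OF cont_r])

lemma int_E: assumes "n \<ge> 1" shows "(E n has_integral 0) {0..1}"
proof -
  obtain m where m: "n = Suc m" using assms by (cases n) auto
  have "(E n has_integral ((- r (Suc n) 1) - (- r (Suc n) 0))) {0..1}"
  proof (rule fundamental_theorem_of_calculus)
    fix x :: real
    have "((\<lambda>x. - r (Suc n) x) has_real_derivative - (- E n x)) (at x)"
      by (rule DERIV_minus[OF deriv_r])
    then show "((\<lambda>x. - r (Suc n) x) has_vector_derivative E n x) (at x within {0..1})"
      by (simp add: has_real_derivative_iff_has_vector_derivative has_vector_derivative_at_within)
  qed simp
  then show ?thesis using m by (simp only: r_at0 r_at1) simp
qed

definition b :: "nat \<Rightarrow> real" where "b j = integral {0..1} (r j)"

lemma b0: "b 0 = 1"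
proof -
  have "r 0 = (\<lambda>_. 1)" by (rule ext) simp
  then show ?thesis by (simp add: b_def)
qed

lemma conv: assumes "n \<ge> 1" shows "(\<Sum>j=0..n. b j / (real n + 1 - real j)) = 0"
proof -
  have "(E n has_integral (\<Sum>j=0..n. b j / (real n + 1 - real j))) {0..1}"
    unfolding E_def[abs_def] b_def
    by (intro has_integral_sum finite_atLeastAtMost has_integral_divide integrable_integral int_r)
  with int_E[OF assms] show ?thesis using has_integral_unique by blast
qed

lemma reidx: "j \<le> (i::nat) \<Longrightarrow> (\<Sum>k=j..i. f k) = (\<Sum>m=0..i-j. f (i - m))"
  by (rule sum.reindex_bij_witness[where i="\<lambda>m. i - m" and j="\<lambda>k. i - k"]) auto

lemma conv_delta: "(\<Sum>m=0..n. b m / (real n + 1 - real m)) = (if n = 0 then 1 else 0)"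
  using conv[of n] by (cases n) (auto simp: b0)

definition S0 :: "nat \<Rightarrow> nat \<Rightarrow> real" where "S0 i j = (if j \<le> i then b (i - j) else 0)"

lemma S0_left: "is_identity (lt_mult S0 Tmat)"
  unfolding is_identity_def
proof (intro allI impI)
  fix i j :: nat assume i: "i \<ge> 1" and j: "j \<ge> 1"
  show "lt_mult S0 Tmat i j = (if i = j then 1 else 0)"
  proof (cases "j \<le> i")
    case False
    then show ?thesis unfolding lt_mult_def by (intro trans[OF sum.neutral]) (auto simp: Tmat_def)
  next
    case True
    have "lt_mult S0 Tmat i j = (\<Sum>k=j..i. S0 i k * Tmat k j)"
      unfolding lt_mult_def using j True
      by (intro sum.mono_neutral_right) (auto simp: Tmat_def)
    also have "\<dots> = (\<Sum>m=0..i-j. S0 i (i - m) * Tmat (i - m) j)"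
      by (rule reidx[OF True])
    also have "\<dots> = (\<Sum>m=0..i-j. b m / (real (i - j) + 1 - real m))"
      using True by (intro sum.cong refl) (auto simp: S0_def Tmat_def of_nat_diff)
    also have "\<dots> = (if i = j then 1 else 0)"
      using True conv_delta[of "i - j"] by simp
    finally show ?thesis .
  qed
qed

lemma S0_right: "is_identity (lt_mult Tmat S0)"
  unfolding is_identity_def
proof (intro allI impI)
  fix i j :: nat assume i: "i \<ge> 1" and j: "j \<ge> 1"
  show "lt_mult Tmat S0 i j = (if i = j then 1 else 0)"
  proof (cases "j \<le> i")
    case False
    then show ?thesis unfolding lt_mult_def by (intro trans[OF sum.neutral]) (auto simp: S0_def)
  next
    case True
    have "lt_mult Tmat S0 i j = (\<Sum>k=j..i. Tmat i k * S0 k j)"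
      unfolding lt_mult_def using j True
      by (intro sum.mono_neutral_right) (auto simp: S0_def)
    also have "\<dots> = (\<Sum>k=j..i. b (k - j) / (real (i - j) + 1 - real (k - j)))"
      by (intro sum.cong refl) (auto simp: S0_def Tmat_def of_nat_diff)
    also have "\<dots> = (\<Sum>m=0..i-j. b m / (real (i - j) + 1 - real m))"
      using True by (intro sum.reindex_bij_witness[where i="\<lambda>m. m + j" and j="\<lambda>k. k - j"]) auto
    also have "\<dots> = (if i = j then 1 else 0)"
      using True conv_delta[of "i - j"] by simp
    finally show ?thesis .
  qed
qed

lemma S0_lower: "lower_tri S0"
  by (auto simp: lower_tri_def S0_def)

lemma unique_inv:
  assumes "is_identity (lt_mult S Tmat)" "i \<ge> 1" "j \<ge> 1" "j \<le> i"
  shows "S i j = S0 i j"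
proof -
  have "lt_mult S (lt_mult Tmat S0) i j = lt_mult (lt_mult S Tmat) S0 i j"
  proof -
    have "lt_mult S (lt_mult Tmat S0) i j = (\<Sum>k=1..i. \<Sum>l=1..i. S i k * Tmat k l * S0 l j)"
      unfolding lt_mult_def sum_distrib_left
      by (intro sum.cong refl sum.mono_neutral_cong_left) (auto simp: Tmat_def)
    also have "\<dots> = lt_mult (lt_mult S Tmat) S0 i j"
      unfolding lt_mult_def sum_distrib_right by (rule sum.swap)
    finally show ?thesis .
  qed
  moreover have "lt_mult S (lt_mult Tmat S0) i j = S i j"
  proof -
    have "lt_mult S (lt_mult Tmat S0) i j = (\<Sum>k=1..i. S i k * (if k = j then 1 else 0))"
      unfolding lt_mult_def using S0_right assms unfolding is_identity_def lt_mult_def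
      by (intro sum.cong refl) auto
    also have "\<dots> = (\<Sum>k=1..i. if k = j then S i k else 0)" by (rule sum.cong) auto
    also have "\<dots> = S i j" using assms by simp
    finally show ?thesis .
  qed
  moreover have "lt_mult (lt_mult S Tmat) S0 i j = S0 i j"
  proof -
    have "lt_mult (lt_mult S Tmat) S0 i j = (\<Sum>k=1..i. (if i = k then 1 else 0) * S0 k j)"
      unfolding lt_mult_def using assms(1,2) unfolding is_identity_def lt_mult_def
      by (intro sum.cong refl) auto
    also have "\<dots> = (\<Sum>k=1..i. if i = k then S0 k j else 0)" by (rule sum.cong) auto
    also have "\<dots> = S0 i j" using assms by simp
    finally show ?thesis .
  qed
  ultimately show ?thesis by simp
qed

lemma w_eq:
  assumes "is_identity (lt_mult S Tmat)" "n \<ge> 1"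
  shows "lt_apply S (\<lambda>k. 1 / real (k + 1)) n = - b n"
proof -
  have "lt_apply S (\<lambda>k. 1 / real (k + 1)) n = (\<Sum>k=1..n. b (n - k) / (real n + 1 - real (n - k)))"
    unfolding lt_apply_def using assms
    by (intro sum.cong refl) (auto simp: unique_inv S0_def of_nat_diff)
  also have "\<dots> = (\<Sum>m=0..n-1. b m / (real n + 1 - real m))"
    using assms(2) by (intro sum.reindex_bij_witness[where i="\<lambda>m. n - m" and j="\<lambda>k. n - k"]) auto
  finally have *: "lt_apply S (\<lambda>k. 1 / real (k + 1)) n = (\<Sum>m=0..n-1. b m / (real n + 1 - real m))" .
  have "(\<Sum>m=0..n. b m / (real n + 1 - real m)) = (\<Sum>m=0..n-1. b m / (real n + 1 - real m)) + b n"
    using assms(2) by (cases n) (auto simp: sum.atLeast0_atMost_Suc)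
  with conv[OF assms(2)] * show ?thesis by simp
qed



definition phi :: "real \<Rightarrow> real \<Rightarrow> real" where
  "phi x u = (1 - u powr x) / (1 - u)"

definition Phi :: "real \<Rightarrow> real" where
  "Phi x = suminf (\<lambda>k. 1 / (real k + 1) - 1 / (real k + 1 + x))"

lemma Phi_sums: assumes "0 \<le> x" "x \<le> 1"
  shows "(\<lambda>k. 1 / (real k + 1) - 1 / (real k + 1 + x)) sums Phi x"
proof -
  have "summable (\<lambda>k. 1 / (real k + 1) - 1 / (real k + 1 + x))"
  proof (rule summable_comparison_test')
    show "summable (\<lambda>n. 1 / (real n + 1)^2)"
      using sums_summable[OF inverse_squares_sums] by (simp add: add.commute)
    fix n :: nat
    have "1 / (real n + 1) - 1 / (real n + 1 + x) = x / ((real n + 1) * (real n + 1 + x))"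
      using assms by (simp add: field_simps)
    also have "\<dots> \<le> 1 / (real n + 1)^2"
    proof (rule frac_le)
      show "(real n + 1)^2 \<le> (real n + 1) * (real n + 1 + x)"
        using assms by (simp add: power2_eq_square)
    qed (use assms in auto)
    finally show "norm (1 / (real n + 1) - 1 / (real n + 1 + x)) \<le> 1 / (real n + 1)^2"
      using assms by (simp add: field_simps)
  qed
  then show ?thesis unfolding Phi_def by (rule summable_sums)
qed

lemma L1: assumes x: "0 \<le> x" "x \<le> 1"
  shows "(phi x has_integral Phi x) {0<..<1}"
proof (rule has_integral_monotone_convergence_increasing)
  define g where "g = (\<lambda>N u. \<Sum>k<N. u powr (real k) - u powr (real k + x))"
  show "(g N has_integral (\<Sum>k<N. 1 / (real k + 1) - 1 / (real k + 1 + x))) {0<..<1}" for N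
  proof -
    have "(g N has_integral (\<Sum>k<N. 1 / (real k + 1) - 1 / (real k + 1 + x))) {0..1}"
      unfolding g_def
    proof (intro has_integral_sum has_integral_diff finite_lessThan)
      fix k
      show "((\<lambda>u. u powr real k) has_integral 1 / (real k + 1)) {0..1}"
        using has_integral_powr_from_0[of "real k" 1] by simp
      show "((\<lambda>u. u powr (real k + x)) has_integral 1 / (real k + 1 + x)) {0..1}"
        using has_integral_powr_from_0[of "real k + x" 1] x by (simp add: add_ac)
    qed
    then show ?thesis by (simp add: has_integral_Icc_iff_Ioo)
  qed
  show "g k u \<le> g (Suc k) u" if "u \<in> {0<..<1}" for k u
    using that x by (simp add: g_def powr_mono')
  show "(\<lambda>k. g k u) \<longlonglongrightarrow> phi x u" if u: "u \<in> {0<..<1}" for u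
  proof -
    have "(\<lambda>k. u ^ k) sums (1 / (1 - u))" using u geometric_sums[of u] by simp
    then have "(\<lambda>k. u ^ k * (1 - u powr x)) sums (1 / (1 - u) * (1 - u powr x))"
      by (rule sums_mult2)
    moreover have "u ^ k * (1 - u powr x) = u powr (real k) - u powr (real k + x)" for k
      using u by (simp add: powr_add powr_realpow algebra_simps)
    ultimately have "(\<lambda>k. u powr (real k) - u powr (real k + x)) sums phi x u"
      by (simp add: phi_def)
    then show ?thesis by (simp add: sums_def g_def)
  qed
  show "(\<lambda>N. \<Sum>k<N. 1 / (real k + 1) - 1 / (real k + 1 + x)) \<longlonglongrightarrow> Phi x"
    using Phi_sums[OF x] by (simp add: sums_def)
qed

lemma int_pow1m: "((\<lambda>u. (1 - u) ^ n) has_integral 1 / (real n + 1)) {0..1::real}"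
proof -
  define F where "F = (\<lambda>u::real. - ((1 - u) ^ Suc n) / (real n + 1))"
  have "((\<lambda>u. (1 - u) ^ n) has_integral (F 1 - F 0)) {0..1::real}"
  proof (rule fundamental_theorem_of_calculus)
    fix u :: real
    have d1: "((\<lambda>u. 1 - u) has_real_derivative -1) (at u)"
      by (auto intro!: derivative_eq_intros)
    have "(F has_real_derivative - ((1 + real n) * (-1 * (1 - u) ^ n)) / (real n + 1)) (at u)"
      unfolding F_def by (intro DERIV_cdivide DERIV_minus DERIV_power_Suc d1)
    moreover have "- ((1 + real n) * (-1 * (1 - u) ^ n)) / (real n + 1) = (1 - u) ^ n"
      by (simp add: field_simps)
    ultimately have "(F has_real_derivative (1 - u) ^ n) (at u)" by simp
    then show "(F has_vector_derivative (1 - u) ^ n) (at u within {0..1})"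
      by (simp add: has_real_derivative_iff_has_vector_derivative has_vector_derivative_at_within)
  qed simp
  then show ?thesis by (simp add: F_def)
qed

lemma r_series: assumes u: "0 < u" "u < 1"
  shows "(\<lambda>n. - r (Suc n) x * (1 - u) ^ n) sums phi x u"
proof -
  have "\<bar>u - 1\<bar> < 1" using u by auto
  from gen_binomial_real[OF this, of x]
  have "(\<lambda>n. (x gchoose n) * (u - 1) ^ n) sums u powr x" by simp
  moreover have "(x gchoose n) * (u - 1) ^ n = r n x * (1 - u) ^ n" for n
  proof -
    have "(u - 1) ^ n = (-1) ^ n * (1 - u) ^ n"
      by (metis minus_diff_eq power_minus)
    then show ?thesis by (simp add: r_gchoose)
  qed
  ultimately have "(\<lambda>n. r n x * (1 - u) ^ n) sums u powr x" by simp
  then have "(\<lambda>n. r (Suc n) x * (1 - u) ^ Suc n) sums (u powr x - 1)"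
    by (subst sums_Suc_iff) simp
  then have "(\<lambda>n. r (Suc n) x * (1 - u) ^ Suc n / (u - 1)) sums ((u powr x - 1) / (u - 1))"
    by (rule sums_divide)
  moreover have "r (Suc n) x * (1 - u) ^ Suc n / (u - 1) = - r (Suc n) x * (1 - u) ^ n" for n
  proof -
    have "u - 1 \<noteq> 0" using u by simp
    then show ?thesis by (simp del: r.simps add: field_simps)
  qed
  moreover have "(u powr x - 1) / (u - 1) = phi x u"
    using u by (simp add: phi_def field_simps)
  ultimately show ?thesis by simp
qed

lemma L2: assumes x: "0 \<le> x" "x \<le> 1"
  shows "(\<lambda>n. - r (Suc n) x / real (Suc n)) sums Phi x"
proof -
  define h where "h = (\<lambda>N u. \<Sum>n<N. - r (Suc n) x * (1 - u) ^ n)"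
  have hint: "(h N has_integral (\<Sum>n<N. - r (Suc n) x / real (Suc n))) {0<..<1}" for N
  proof -
    have "(h N has_integral (\<Sum>n<N. - r (Suc n) x * (1 / (real n + 1)))) {0..1}"
      unfolding h_def by (intro has_integral_sum has_integral_mult_right int_pow1m finite_lessThan)
    moreover have "(\<Sum>n<N. - r (Suc n) x * (1 / (real n + 1))) = (\<Sum>n<N. - r (Suc n) x / real (Suc n))"
      by (intro sum.cong refl) (simp del: r.simps add: add.commute)
    ultimately show ?thesis by (simp only: has_integral_Icc_iff_Ioo)
  qed
  have nn: "0 \<le> - r (Suc n) x * (1 - u) ^ n" if "u \<in> {0<..<1}" for n u
    using that r_nonpos[OF x, of n] by (intro mult_nonneg_nonneg) (auto simp del: r.simps)
  have lim: "(\<lambda>N. h N u) \<longlonglongrightarrow> phi x u" if "u \<in> {0<..<1}" for u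
    using r_series[of u x] that by (simp add: h_def sums_def)
  have mc: "phi x integrable_on {0<..<1} \<and> (\<lambda>N. integral {0<..<1} (h N)) \<longlonglongrightarrow> integral {0<..<1} (phi x)"
  proof (rule monotone_convergence_increasing)
    show "h N integrable_on {0<..<1}" for N using hint by blast
    show "h N u \<le> h (Suc N) u" if "u \<in> {0<..<1}" for N u
      using nn[OF that, of N] by (simp add: h_def)
    show "(\<lambda>N. h N u) \<longlonglongrightarrow> phi x u" if "u \<in> {0<..<1}" for u using lim that by blast
    show "bounded (range (\<lambda>N. integral {0<..<1} (h N)))"
      unfolding bounded_real
    proof (intro exI ballI)
      fix y assume "y \<in> range (\<lambda>N. integral {0<..<1} (h N))"
      then obtain N where y: "y = integral {0<..<1} (h N)" by auto
      have "0 \<le> integral {0<..<1} (h N)"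
      proof (rule integral_nonneg)
        show "h N integrable_on {0<..<1}" using hint by blast
        fix u :: real assume u: "u \<in> {0<..<1}"
        show "0 \<le> h N u" unfolding h_def by (rule sum_nonneg) (rule nn[OF u])
      qed
      moreover have "integral {0<..<1} (h N) \<le> integral {0<..<1} (phi x)"
      proof (rule integral_le)
        show "h N integrable_on {0<..<1}" using hint by blast
        show "phi x integrable_on {0<..<1}" using L1[OF x] by blast
        fix u :: real assume u: "u \<in> {0<..<1}"
        show "h N u \<le> phi x u"
        proof -
          have s: "(\<lambda>n. - r (Suc n) x * (1 - u) ^ n) sums phi x u" using r_series[of u x] u by simp
          have "(\<Sum>n<N. - r (Suc n) x * (1 - u) ^ n) \<le> (\<Sum>n. - r (Suc n) x * (1 - u) ^ n)"
            by (rule sum_le_suminf[OF sums_summable[OF s] finite_lessThan nn[OF u]])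
          then show ?thesis unfolding h_def using s by (simp add: sums_iff)
        qed
      qed
      ultimately show "\<bar>y\<bar> \<le> integral {0<..<1} (phi x)" using y by simp
    qed
  qed
  have "integral {0<..<1} (phi x) = Phi x" using L1[OF x] by blast
  note ePhi = this
  have e: "integral {0<..<1} (h N) = (\<Sum>n<N. - r (Suc n) x / real (Suc n))" for N
    by (rule integral_unique[OF hint])
  have "(\<lambda>N. \<Sum>n<N. - r (Suc n) x / real (Suc n)) \<longlonglongrightarrow> Phi x"
    using mc unfolding e ePhi by blast
  then show ?thesis by (simp add: sums_def)
qed

lemma int_inv: "((\<lambda>x. 1 / (real k + 1 + x)) has_integral (ln (real k + 2) - ln (real k + 1))) {0..1}"
proof -
  have "((\<lambda>x. 1 / (real k + 1 + x)) has_integral (ln (real k + 1 + 1) - ln (real k + 1 + 0))) {0..1}"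
  proof (rule fundamental_theorem_of_calculus)
    fix x :: real assume x: "x \<in> {0..1}"
    then have "((\<lambda>x. ln (real k + 1 + x)) has_real_derivative 1 / (real k + 1 + x)) (at x)"
      by (auto intro!: derivative_eq_intros simp: field_simps)
    then show "((\<lambda>x. ln (real k + 1 + x)) has_vector_derivative 1 / (real k + 1 + x)) (at x within {0..1})"
      by (simp add: has_real_derivative_iff_has_vector_derivative has_vector_derivative_at_within)
  qed simp
  moreover have "real k + 1 + 1 = real k + 2" by simp
  ultimately show ?thesis by simp
qed

lemma L3: "(Phi has_integral euler_mascheroni) {0..1}"
proof (rule has_integral_monotone_convergence_increasing)
  define f where "f = (\<lambda>N x. \<Sum>k<N. 1 / (real k + 1) - 1 / (real k + 1 + x))"
  show "(f N has_integral (\<Sum>k<N. inverse (of_nat (k+1)) + ln (of_nat (k+1)) - ln (of_nat (k+2)) :: real)) {0..1}" for N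
  proof -
    have "(f N has_integral (\<Sum>k<N. 1 / (real k + 1) - (ln (real k + 2) - ln (real k + 1)))) {0..1}"
      unfolding f_def
    proof (intro has_integral_sum has_integral_diff finite_lessThan int_inv)
      fix k
      show "((\<lambda>x. 1 / (real k + 1)) has_integral 1 / (real k + 1)) {0..1::real}"
        using has_integral_const_real[of "1 / (real k + 1)" 0 1] by simp
    qed
    moreover have "(\<Sum>k<N. 1 / (real k + 1) - (ln (real k + 2) - ln (real k + 1))) = (\<Sum>k<N. inverse (of_nat (k+1)) + ln (of_nat (k+1)) - ln (of_nat (k+2)) :: real)"
      by (intro sum.cong refl) (simp add: field_simps add.commute)
    ultimately show ?thesis by simp
  qed
  show "f k x \<le> f (Suc k) x" if "x \<in> {0..1}" for k x
    using that by (simp add: f_def frac_le)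
  show "(\<lambda>k. f k x) \<longlonglongrightarrow> Phi x" if "x \<in> {0..1}" for x
    using Phi_sums[of x] that by (simp add: sums_def f_def)
  show "(\<lambda>N. \<Sum>k<N. inverse (of_nat (k+1)) + ln (of_nat (k+1)) - ln (of_nat (k+2)) :: real) \<longlonglongrightarrow> euler_mascheroni"
    using euler_mascheroni_sum_real by (simp add: sums_def)
qed

lemma L4: "(\<lambda>n. - b (Suc n) / real (Suc n)) sums euler_mascheroni"
proof -
  define F where "F = (\<lambda>N x. \<Sum>n<N. - r (Suc n) x / real (Suc n))"
  have Fint: "(F N has_integral (\<Sum>n<N. - b (Suc n) / real (Suc n))) {0..1}" for N
    unfolding F_def b_def
    by (intro has_integral_sum finite_lessThan has_integral_divide has_integral_neg integrable_integral int_r)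
  have nn: "0 \<le> - r (Suc n) x / real (Suc n)" if "x \<in> {0..1}" for n x
    using that r_nonpos[of x n] by (intro divide_nonneg_nonneg) (auto simp del: r.simps)
  have mc: "Phi integrable_on {0..1} \<and> (\<lambda>N. integral {0..1} (F N)) \<longlonglongrightarrow> integral {0..1} Phi"
  proof (rule monotone_convergence_increasing)
    show "F N integrable_on {0..1}" for N using Fint by blast
    show "F N x \<le> F (Suc N) x" if "x \<in> {0..1}" for N x
      using nn[OF that, of N] by (simp add: F_def del: r.simps)
    show "(\<lambda>N. F N x) \<longlonglongrightarrow> Phi x" if "x \<in> {0..1}" for x
      using L2[of x] that by (simp add: F_def sums_def del: r.simps)
    show "bounded (range (\<lambda>N. integral {0..1} (F N)))"
      unfolding bounded_real
    proof (intro exI ballI)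
      fix y assume "y \<in> range (\<lambda>N. integral {0..1} (F N))"
      then obtain N where y: "y = integral {0..1} (F N)" by auto
      have "0 \<le> integral {0..1} (F N)"
      proof (rule integral_nonneg)
        show "F N integrable_on {0..1}" using Fint by blast
        fix x :: real assume x: "x \<in> {0..1}"
        show "0 \<le> F N x" unfolding F_def by (rule sum_nonneg) (rule nn[OF x])
      qed
      moreover have "integral {0..1} (F N) \<le> integral {0..1} Phi"
      proof (rule integral_le)
        show "F N integrable_on {0..1}" using Fint by blast
        show "Phi integrable_on {0..1}" using L3 by blast
        fix x :: real assume x: "x \<in> {0..1}"
        have s: "(\<lambda>n. - r (Suc n) x / real (Suc n)) sums Phi x" using L2[of x] x by simp
        have "(\<Sum>n<N. - r (Suc n) x / real (Suc n)) \<le> (\<Sum>n. - r (Suc n) x / real (Suc n))"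
          by (rule sum_le_suminf[OF sums_summable[OF s] finite_lessThan nn[OF x]])
        then show "F N x \<le> Phi x" unfolding F_def using s by (simp add: sums_iff)
      qed
      ultimately show "\<bar>y\<bar> \<le> integral {0..1} Phi" using y by simp
    qed
  qed
  have ePhi: "integral {0..1} Phi = euler_mascheroni" using L3 by blast
  have e: "integral {0..1} (F N) = (\<Sum>n<N. - b (Suc n) / real (Suc n))" for N
    by (rule integral_unique[OF Fint])
  have "(\<lambda>N. \<Sum>n<N. - b (Suc n) / real (Suc n)) \<longlonglongrightarrow> euler_mascheroni"
    using mc unfolding e ePhi by blast
  then show ?thesis by (simp add: sums_def)
qed

theorem mainTheorem5:
  shows "(\<exists>S. lower_tri S \<and> is_identity (lt_mult S Tmat) \<and> is_identity (lt_mult Tmat S))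
    \<and> (\<forall>S. lower_tri S \<and> is_identity (lt_mult S Tmat) \<and> is_identity (lt_mult Tmat S) \<longrightarrow>
         (let w = lt_apply S (\<lambda>k. 1 / real (k + 1))
          in (\<lambda>n. w (Suc n) / real (Suc n)) sums euler_mascheroni))"
proof (intro conjI allI impI)
  show "\<exists>S. lower_tri S \<and> is_identity (lt_mult S Tmat) \<and> is_identity (lt_mult Tmat S)"
    using S0_lower S0_left S0_right by blast
next
  fix S assume S: "lower_tri S \<and> is_identity (lt_mult S Tmat) \<and> is_identity (lt_mult Tmat S)"
  have "lt_apply S (\<lambda>k. 1 / real (k + 1)) (Suc n) = - b (Suc n)" for n
    using S by (intro w_eq) auto
  then show "let w = lt_apply S (\<lambda>k. 1 / real (k + 1))
          in (\<lambda>n. w (Suc n) / real (Suc n)) sums euler_mascheroni"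
    using L4 by (simp add: Let_def)
qed

end
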